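(* Let $S$ be a surface of revolution in $E^{3}$ with nowhere vanishing Gaussian curvature $K$, and suppose its position vector $\boldsymbol{x}$ satisfies $\Delta^{II}\boldsymbol{x}=A\boldsymbol{x}$ for some real $3\times 3$ matrix $A$. Then $S$ is (an open part of) a catenoid or (an open part of) a sphere.
   Context: A surface of revolution is given (after a rigid motion placing the axis of revolution on the $z$-axis) by $\boldsymbol{x}(u,v)=(p(u)\cos v,\,p(u)\sin v,\,q(u))$, $u\in(a,b)$, $v\in[0,2\pi)$, where $p,q$ are smooth, $p>0$, and the profile curve $u\mapsto(p(u),0,q(u))$ is parametrized by arc length, $(p')^{2}+(q')^{2}=1$. Let $\boldsymbol{n}=\frac{\boldsymbol{x}_{u^1}\times\boldsymbol{x}_{u^2}}{\|\boldsymbol{x}_{u^1}\times\boldsymbol{x}_{u^2}\|}$ be the unit normal and $II=b_{ij}du^{i}du^{j}$ the second fundamental form with $b_{ij}=\langle \boldsymbol{x}_{u^iu^j},\boldsymbol{n}\rangle$ (with $(u^1,u^2)=(u,v)$). Since $K\neq0$, $(b_{ij})$ is nondegenerate; let $(b^{ij})$ be its inverse and $b=\det(b_{ij})$. The Laplace (second Beltrami) operator of $II$ acting on a smooth function $f$ is $$\Delta^{II}f=-\frac{1}{\sqrt{|b|}}\frac{\partial}{\partial u^{i}}\Big(\sqrt{|b|}\,b^{ij}\frac{\partial f}{\partial u^{j}}\Big)$$ (summation over $i,j$), and $\Delta^{II}\boldsymbol{x}=(\Delta^{II}x_1,\Delta^{II}x_2,\Delta^{II}x_3)$ is applied to the coordinate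 functions of $\boldsymbol{x}$; $A\boldsymbol{x}$ is the matrix acting on the column vector $(x_1,x_2,x_3)^T$. *)

theory Defs
  imports "HOL-Analysis.Analysis"
begin

definition smooth_real_on :: "real set \<Rightarrow> (real \<Rightarrow> real) \<Rightarrow> bool" where
  "smooth_real_on S f \<longleftrightarrow>
     (\<forall>n. \<forall>x\<in>S. ((deriv ^^ n) f has_real_derivative (deriv ^^ Suc n) f x) (at x))"

definition rev_surf :: "(real \<Rightarrow> real) \<Rightarrow> (real \<Rightarrow> real) \<Rightarrow> real \<Rightarrow> real \<Rightarrow> real^3" where
  "rev_surf p q u v = vector [p u * cos v, p u * sin v, q u]"

definition pd :: "nat \<Rightarrow> (real \<Rightarrow> real \<Rightarrow> 'a::real_normed_vector) \<Rightarrow> real \<Rightarrow> real \<Rightarrow> 'a" where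
  "pd i f u v = (if i = 1 then vector_derivative (\<lambda>s. f s v) (at u)
                 else vector_derivative (\<lambda>s. f u s) (at v))"

definition unit_normal :: "(real \<Rightarrow> real \<Rightarrow> real^3) \<Rightarrow> real \<Rightarrow> real \<Rightarrow> real^3" where
  "unit_normal X u v =
     (let c = cross3 (pd 1 X u v) (pd 2 X u v) in (1 / norm c) *\<^sub>R c)"

definition fff :: "(real \<Rightarrow> real \<Rightarrow> real^3) \<Rightarrow> nat \<Rightarrow> nat \<Rightarrow> real \<Rightarrow> real \<Rightarrow> real" where
  "fff X i j u v = pd i X u v \<bullet> pd j X u v"

definition sff :: "(real \<Rightarrow> real \<Rightarrow> real^3) \<Rightarrow> nat \<Rightarrow> nat \<Rightarrow> real \<Rightarrow> real \<Rightarrow> real" where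
  "sff X i j u v = pd j (pd i X) u v \<bullet> unit_normal X u v"

definition det2 :: "(nat \<Rightarrow> nat \<Rightarrow> real) \<Rightarrow> real" where
  "det2 M = M 1 1 * M 2 2 - M 1 2 * M 2 1"

definition inv2 :: "(nat \<Rightarrow> nat \<Rightarrow> real) \<Rightarrow> nat \<Rightarrow> nat \<Rightarrow> real" where
  "inv2 M i j = (if i = 1 \<and> j = 1 then M 2 2 else if i = 2 \<and> j = 2 then M 1 1 else - M i j) / det2 M"

definition gauss_curv :: "(real \<Rightarrow> real \<Rightarrow> real^3) \<Rightarrow> real \<Rightarrow> real \<Rightarrow> real" where
  "gauss_curv X u v = det2 (\<lambda>i j. sff X i j u v) / det2 (\<lambda>i j. fff X i j u v)"

definition laplace_II :: "(real \<Rightarrow> real \<Rightarrow> real^3) \<Rightarrow> (real \<Rightarrow> real \<Rightarrow> real) \<Rightarrow> real \<Rightarrow> real \<Rightarrow> real" where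
  "laplace_II X f u v =
     - (1 / sqrt \<bar>det2 (\<lambda>k l. sff X k l u v)\<bar>) *
       (\<Sum>i\<in>{1,2}. pd i (\<lambda>u' v'. sqrt \<bar>det2 (\<lambda>k l. sff X k l u' v')\<bar> *
            (\<Sum>j\<in>{1,2}. inv2 (\<lambda>k l. sff X k l u' v') i j * pd j f u' v')) u v)"

definition std_catenoid :: "real \<Rightarrow> (real^3) set" where
  "std_catenoid c = {x. sqrt ((x$1)^2 + (x$2)^2) = c * cosh (x$3 / c)}"

definition is_catenoid :: "(real^3) set \<Rightarrow> bool" where
  "is_catenoid C \<longleftrightarrow> (\<exists>c>0. \<exists>f::real^3 \<Rightarrow> real^3.
      (\<forall>x y. dist (f x) (f y) = dist x y) \<and> C = f ` std_catenoid c)"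

definition is_sphere :: "(real^3) set \<Rightarrow> bool" where
  "is_sphere C \<longleftrightarrow> (\<exists>z r. r > 0 \<and> C = sphere z r)"

end

theory Submission
  imports Defs "HOL-Computational_Algebra.Polynomial"
begin
definition Pf :: "real \<Rightarrow> real \<Rightarrow> real \<Rightarrow> real \<Rightarrow> real" where
  "Pf la mu x y = (0 - la^3 * x^3 * y + la^2 * mu * x^3 * y + 2 * la^2 * x^2 * y^2 + 2 * la^2 * x^2 - 2 * la * mu * x^2 * y^2 - la * mu * x^2 - la * x * y^3 - 4 * la * x * y + mu * x * y^3 + mu * x * y + 2 * y^2)"

definition Tf :: "real \<Rightarrow> real \<Rightarrow> real \<Rightarrow> real \<Rightarrow> real" where
  "Tf la mu x y = (la^5 * x^5 * y - 2 * la^4 * mu * x^5 * y - 4 * la^4 * x^4 * y^2 - 2 * la^4 * x^4 + la^3 * mu^2 * x^5 * y + 8 * la^3 * mu * x^4 * y^2 + 3 * la^3 * mu * x^4 + 3 * la^3 * x^3 * y^3 + 10 * la^3 * x^3 * y - 4 * la^2 * mu^2 * x^4 * y^2 - la^2 * mu^2 * x^4 - 6 * la^2 * mu * x^3 * y^3 - 15 * la^2 * mu * x^3 * y - 10 * la^2 * x^2 * y^2 - 4 * la^2 * x^2 + 3 * la * mu^2 * x^3 * y^3 + 5 * la * mu^2 * x^3 * y + 13 * la * mu * x^2 * y^2 + 4 * la * mu * x^2 + 2 * la * x * y^3 + 8 * la * x * y - 3 * mu^2 * x^2 * y^2 - mu^2 * x^2 - 2 * mu * x * y^3 - 4 * mu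 * x * y - 4 * y^2)"

lemma cert1: "(la^11 * mu^2 * x^13 + 4 * la^11 * mu * x^12 * y - 6 * la^10 * mu^3 * x^13 - 30 * la^10 * mu^2 * x^12 * y - 12 * la^10 * mu * x^11 * y^2 - 8 * la^10 * mu * x^11 + 15 * la^9 * mu^4 * x^13 + 96 * la^9 * mu^3 * x^12 * y + 81 * la^9 * mu^2 * x^11 * y^2 + 54 * la^9 * mu^2 * x^11 + 16 * la^9 * mu * x^10 * y - 20 * la^8 * mu^5 * x^13 - 170 * la^8 * mu^4 * x^12 * y - 234 * la^8 * mu^3 * x^11 * y^2 - 152 * la^8 * mu^3 * x^11 - 116 * la^8 * mu^2 * x^10 * y + 40 * la^8 * mu * x^9 * y^2 + 16 * la^8 * mu * x^9 + 15 * la^7 * mu^6 * x^13 + 180 * la^7 * mu^5 * x^12 * y + 375 * la^7 * mu^4 * x^11 * y^2 + 230 * la^7 * mu^4 * x^11 + 340 * la^7 * mu^3 * x^10 * y - 236 * la^7 * mu^2 * x^9 * y^2 - 68 * la^7 * mu^2 * x^9 - 112 * la^7 * mu * x^8 * y - 6 * la^6 * mu^7 * x^13 - 114 * la^6 * mu^6 * x^12 * y - 360 * la^6 * mu^5 * x^11 * y^2 - 200 * la^6 * mu^5 * x^11 - 520 * la^6 * mu^4 * x^10 * y + 598 * la^6 * mu^3 * x^9 * y^2 + 132 * la^6 * mu^3 * x^9 + 580 * la^6 * mu^2 * x^8 * y + 32 * la^6 * mu * x^7 * y^2 + 64 * la^6 * mu * x^7 + la^5 * mu^8 * x^13 + 40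 * la^5 * mu^7 * x^12 * y + 207 * la^5 * mu^6 * x^11 * y^2 + 98 * la^5 * mu^6 * x^11 + 440 * la^5 * mu^5 * x^10 * y - 850 * la^5 * mu^4 * x^9 * y^2 - 177 * la^5 * mu^4 * x^9 - 1304 * la^5 * mu^3 * x^8 * y - 132 * la^5 * mu^2 * x^7 * y^2 - 280 * la^5 * mu^2 * x^7 - 64 * la^5 * mu * x^6 * y - 6 * la^4 * mu^8 * x^12 * y - 66 * la^4 * mu^7 * x^11 * y^2 - 24 * la^4 * mu^7 * x^11 - 196 * la^4 * mu^6 * x^10 * y + 740 * la^4 * mu^5 * x^9 * y^2 + 188 * la^4 * mu^5 * x^9 + 1674 * la^4 * mu^4 * x^8 * y + 220 * la^4 * mu^3 * x^7 * y^2 + 548 * la^4 * mu^3 * x^7 + 184 * la^4 * mu^2 * x^6 * y + 9 * la^3 * mu^8 * x^11 * y^2 + 2 * la^3 * mu^8 * x^11 + 36 * la^3 * mu^7 * x^10 * y - 400 * la^3 * mu^6 * x^9 * y^2 - 138 * la^3 * mu^6 * x^9 - 1336 * la^3 * mu^5 * x^8 * y - 200 * la^3 * mu^4 * x^7 * y^2 - 636 * la^3 * mu^4 * x^7 - 176 * la^3 * mu^3 * x^6 * y + 16 * la^3 * mu^2 * x^5 * y^2 + 32 * la^3 * mu^2 * x^5 + 126 * la^2 * mu^7 * x^9 * y^2 + 56 * la^2 * mu^7 * x^9 + 656 * la^2 * mu^6 * x^8 * y + 120 * la^2 * mu^5 * x^7 * y^2 + 460 * la^2 * mu^5 * x^7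 + 64 * la^2 * mu^4 * x^6 * y - 48 * la^2 * mu^3 * x^5 * y^2 - 80 * la^2 * mu^3 * x^5 - 32 * la^2 * mu^2 * x^4 * y - 18 * la * mu^8 * x^9 * y^2 - 9 * la * mu^8 * x^9 - 176 * la * mu^7 * x^8 * y - 52 * la * mu^6 * x^7 * y^2 - 188 * la * mu^6 * x^7 - 16 * la * mu^5 * x^6 * y + 48 * la * mu^4 * x^5 * y^2 + 64 * la * mu^4 * x^5 + 64 * la * mu^3 * x^4 * y + 18 * mu^8 * x^8 * y + 12 * mu^7 * x^7 * y^2 + 32 * mu^7 * x^7 + 8 * mu^6 * x^6 * y - 16 * mu^5 * x^5 * y^2 - 16 * mu^5 * x^5 - 32 * mu^4 * x^4 * y) * Pf la mu x y + (la^9 * mu^2 * x^11 + 4 * la^9 * mu * x^10 * y - 5 * la^8 * mu^3 * x^11 - 24 * la^8 * mu^2 * x^10 * y - 4 * la^8 * mu * x^9 * y^2 - 8 * la^8 * mu * x^9 + 10 * la^7 * mu^4 * x^11 + 60 * la^7 * mu^3 * x^10 * y + 23 * la^7 * mu^2 * x^9 * y^2 + 44 * la^7 * mu^2 * x^9 - 8 * la^7 * mu * x^8 * y - 10 * la^6 * mu^5 * x^11 - 80 * la^6 * mu^4 * x^10 * y - 55 * la^6 * mu^3 * x^9 * y^2 - 96 * la^6 * mu^3 * x^9 + 36 * la^6 * mu^2 * x^8 * y + 16 * la^6 * mu * x^7 * y^2 + 32 * la^6 * mu * x^7 + 5 * la^5 * mu^6 * x^11 + 60 * la^5 * mu^5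 * x^10 * y + 70 * la^5 * mu^4 * x^9 * y^2 + 104 * la^5 * mu^4 * x^9 - 71 * la^5 * mu^3 * x^8 * y - 78 * la^5 * mu^2 * x^7 * y^2 - 132 * la^5 * mu^2 * x^7 - 32 * la^5 * mu * x^6 * y - la^4 * mu^7 * x^11 - 24 * la^4 * mu^6 * x^10 * y - 50 * la^4 * mu^5 * x^9 * y^2 - 56 * la^4 * mu^5 * x^9 + 84 * la^4 * mu^4 * x^8 * y + 158 * la^4 * mu^3 * x^7 * y^2 + 232 * la^4 * mu^3 * x^7 + 116 * la^4 * mu^2 * x^6 * y + 4 * la^3 * mu^7 * x^10 * y + 19 * la^3 * mu^6 * x^9 * y^2 + 12 * la^3 * mu^6 * x^9 - 66 * la^3 * mu^5 * x^8 * y - 172 * la^3 * mu^4 * x^7 * y^2 - 228 * la^3 * mu^4 * x^7 - 172 * la^3 * mu^3 * x^6 * y + 8 * la^3 * mu^2 * x^5 * y^2 + 16 * la^3 * mu^2 * x^5 - 3 * la^2 * mu^7 * x^9 * y^2 + 32 * la^2 * mu^6 * x^8 * y + 108 * la^2 * mu^5 * x^7 * y^2 + 132 * la^2 * mu^5 * x^7 + 140 * la^2 * mu^4 * x^6 * y - 24 * la^2 * mu^3 * x^5 * y^2 - 32 * la^2 * mu^3 * x^5 - 16 * la^2 * mu^2 * x^4 * y - 7 * la * mu^7 * x^8 * y - 38 * la * mu^6 * x^7 * y^2 - 40 * la * mu^6 * x^7 - 68 * la * mu^5 * x^6 * y + 24 * la * mu^4 * x^5 * y^2 + 16 * la * mu^4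 * x^5 + 32 * la * mu^3 * x^4 * y + 6 * mu^7 * x^7 * y^2 + 4 * mu^7 * x^7 + 16 * mu^6 * x^6 * y - 8 * mu^5 * x^5 * y^2 - 16 * mu^4 * x^4 * y) * Tf la mu x y = x^9 * ((8 * la^5 * mu^4 - 36 * la^4 * mu^5 + 64 * la^3 * mu^6 - 56 * la^2 * mu^7 + 24 * la * mu^8 - 4 * mu^9) + (8 * la^8 * mu^3 - 46 * la^7 * mu^4 + 109 * la^6 * mu^5 - 136 * la^5 * mu^6 + 94 * la^4 * mu^7 - 34 * la^3 * mu^8 + 5 * la^2 * mu^9) * x^2 + (0 - 2 * la^10 * mu^3 + 11 * la^9 * mu^4 - 25 * la^8 * mu^5 + 30 * la^7 * mu^6 - 20 * la^6 * mu^7 + 7 * la^5 * mu^8 - la^4 * mu^9) * x^4)"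
  unfolding Pf_def Tf_def by algebra

lemma cert2: "Pf la (2*la) x y = y * (la^3 * x^3 - 2 * la^2 * x^2 * y + la * x * y^2 - 2 * la * x + 2 * y)" "Tf la (2*la) x y = y * (la^5 * x^5 - 4 * la^4 * x^4 * y + 3 * la^3 * x^3 * y^2 + 4 * la^2 * x^2 * y - 2 * la * x * y^2 - 4 * y)"
  "(0 - 6 * la^12 * x^12 + 18 * la^11 * x^11 * y + 16 * la^10 * x^10 - 78 * la^9 * x^9 * y - 20 * la^8 * x^8 + 80 * la^7 * x^7 * y + 56 * la^6 * x^6 - 24 * la^5 * x^5 * y - 32 * la^4 * x^4) * (la^3 * x^3 - 2 * la^2 * x^2 * y + la * x * y^2 - 2 * la * x + 2 * y) + (6 * la^10 * x^10 - 6 * la^9 * x^9 * y - 28 * la^8 * x^8 + 22 * la^7 * x^7 * y + 40 * la^6 * x^6 - 12 * la^5 * x^5 * y - 16 * la^4 * x^4) * (la^5 * x^5 - 4 * la^4 * x^4 * y + 3 * la^3 * x^3 * y^2 + 4 * la^2 * x^2 * y - 2 * la * x * y^2 - 4 * y) = (0 - 4) * la^5 * x^5 * (3 * la^6 * x^6 - 20 * la^4 * x^4 + 36 * la^2 * x^2 - 16)"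
  for la x y :: real
  unfolding Pf_def Tf_def by algebra+

lemma c9_fact: "(8 * la^5 * mu^4 - 36 * la^4 * mu^5 + 64 * la^3 * mu^6 - 56 * la^2 * mu^7 + 24 * la * mu^8 - 4 * mu^9) = 4 * mu^4 * (la - mu)^4 * (2 * la - mu)" for la mu :: real
  by algebra

definition Ppf :: "real \<Rightarrow> real \<Rightarrow> real \<Rightarrow> real \<Rightarrow> real" where
  "Ppf la mu x y = (0 - 3 * la^3 * x^2 * y + 3 * la^2 * mu * x^2 * y + 4 * la^2 * x * y^2 + 4 * la^2 * x - 4 * la * mu * x * y^2 - 2 * la * mu * x - la * y^3 - 4 * la * y + mu * y^3 + mu * y)"

definition Psf :: "real \<Rightarrow> real \<Rightarrow> real \<Rightarrow> real \<Rightarrow> real" where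
  "Psf la mu x y = (0 - la^3 * x^3 + la^2 * mu * x^3 + 4 * la^2 * x^2 * y - 4 * la * mu * x^2 * y - 3 * la * x * y^2 - 4 * la * x + 3 * mu * x * y^2 + mu * x + 4 * y)"

definition Kf :: "real \<Rightarrow> real \<Rightarrow> real \<Rightarrow> real \<Rightarrow> real" where
  "Kf la mu x y = (0 - la^2 * x^2 * y + la * mu * x^2 * y + 2 * la * x - mu * x - y)"

lemma T_eq: "Tf la mu x y = x * Ppf la mu x y + Psf la mu x y * Kf la mu x y"
  unfolding Tf_def Ppf_def Psf_def Kf_def by algebra

lemma deriv_loc_const:
  assumes "(f has_real_derivative f') (at x)" "open S" "x \<in> S" "\<And>y. y\<in>S \<Longrightarrow> f y = k"
  shows "f' = 0"
proof -
  have "((\<lambda>_. k) has_real_derivative f') (at x)"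
    by (rule has_field_derivative_transform_within_open[OF assms(1-3)]) (simp add: assms(4))
  moreover have "((\<lambda>_. k) has_real_derivative 0) (at x)" by simp
  ultimately show ?thesis using DERIV_unique by blast
qed

lemma czero:
  fixes c X d :: "real \<Rightarrow> real"
  assumes I: "open I" and dc: "\<And>u. u\<in>I \<Longrightarrow> (c has_real_derivative d u) (at u)"
    and dnz: "\<And>u. u\<in>I \<Longrightarrow> d u \<noteq> 0"
    and cont: "\<And>u. u\<in>I \<Longrightarrow> isCont X u"
    and z: "\<And>u. u\<in>I \<Longrightarrow> c u * X u = 0"
    and u: "u \<in> I"
  shows "X u = 0"
proof (rule ccontr)
  assume nz: "X u \<noteq> 0"
  obtain e where e: "e > 0" "\<And>y. dist u y < e \<Longrightarrow> X y \<noteq> 0"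
    using continuous_at_avoid[OF cont[OF u] nz] by blast
  define S where "S = ball u e \<inter> I"
  have "open S" using I by (simp add: S_def open_Int)
  moreover have "u \<in> S" using u e by (simp add: S_def)
  moreover have "\<And>y. y \<in> S \<Longrightarrow> c y = 0"
    using e z by (auto simp: S_def)
  ultimately have "d u = 0" using deriv_loc_const[OF dc[OF u]] by blast
  with dnz[OF u] show False by simp
qed

lemma poly_const:
  fixes p :: "real \<Rightarrow> real"
  assumes "Q \<noteq> 0" "connected I" "continuous_on I p" "\<And>u. u\<in>I \<Longrightarrow> poly Q (p u) = 0" "u\<in>I" "v\<in>I"
  shows "p u = p v"
proof -
  have "p ` I \<subseteq> {x. poly Q x = 0}" using assms(4) by auto
  hence "finite (p ` I)" using poly_roots_finite[OF assms(1)] finite_subset by blast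
  moreover have "connected (p ` I)" using connected_continuous_image assms(2,3) by blast
  ultimately have "p ` I = {} \<or> (\<exists>a. p ` I = {a})" using connected_finite_iff_sing by blast
  thus ?thesis using assms(5,6) by (metis empty_iff image_eqI singletonD)
qed

lemma core:
  fixes p q c s k :: "real \<Rightarrow> real" and la mu a b :: real
  assumes ab: "a < b"
    and dp: "\<And>u. u\<in>{a<..<b} \<Longrightarrow> (p has_real_derivative c u) (at u)"
    and dq: "\<And>u. u\<in>{a<..<b} \<Longrightarrow> (q has_real_derivative s u) (at u)"
    and dc: "\<And>u. u\<in>{a<..<b} \<Longrightarrow> (c has_real_derivative -(s u * k u)) (at u)"
    and ds: "\<And>u. u\<in>{a<..<b} \<Longrightarrow> (s has_real_derivative c u * k u) (at u)"
    and cs: "\<And>u. u\<in>{a<..<b} \<Longrightarrow> (c u)^2 + (s u)^2 = 1"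
    and knz: "\<And>u. u\<in>{a<..<b} \<Longrightarrow> k u \<noteq> 0"
    and snz: "\<And>u. u\<in>{a<..<b} \<Longrightarrow> s u \<noteq> 0"
    and ppos: "\<And>u. u\<in>{a<..<b} \<Longrightarrow> p u > 0"
    and H1: "\<And>u. u\<in>{a<..<b} \<Longrightarrow> la * p u * s u - mu * q u * c u = 2"
    and H3: "\<And>u. u\<in>{a<..<b} \<Longrightarrow> k u = mu - s u / p u - (la - mu) * (la * p u * s u - 2)"
  shows "(\<exists>r>0. \<forall>u\<in>{a<..<b}. (p u)^2 + (q u)^2 = r^2) \<or>
         (\<exists>C>0. \<exists>d. \<forall>u\<in>{a<..<b}. p u = C * cosh ((q u - d) / C))"
proof -
  define I where "I = {a<..<b}"
  have oI: "open I" and cI: "connected I" and cvI: "convex I" by (auto simp: I_def)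
  define u0 where "u0 = (a + b) / 2"
  have u0I: "u0 \<in> I" using ab by (simp add: I_def u0_def)
  note dp = dp[folded I_def] and dq = dq[folded I_def] and dc = dc[folded I_def] and ds = ds[folded I_def]
    and cs = cs[folded I_def] and knz = knz[folded I_def] and snz = snz[folded I_def]
    and ppos = ppos[folded I_def] and H1 = H1[folded I_def] and H3 = H3[folded I_def]
  have iscp: "isCont p u" and iscq: "isCont q u" and iscs: "isCont s u" and iscc: "isCont c u"
    if "u \<in> I" for u
    using dp[OF that] dq[OF that] ds[OF that] dc[OF that] by (auto intro: DERIV_isCont)
  have contp: "continuous_on I p" using iscp by (simp add: continuous_at_imp_continuous_on)
  have dnz: "-(s u * k u) \<noteq> 0" if "u \<in> I" for u using snz[OF that] knz[OF that] by simp
  have cz: "X u = 0" if "\<And>u. u\<in>I \<Longrightarrow> isCont X u" "\<And>u. u\<in>I \<Longrightarrow> c u * X u = 0" "u \<in> I" for X u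
    using czero[OF oI dc dnz that(1) that(2) that(3)] .
  have nonconst: False if cst: "\<And>u. u\<in>I \<Longrightarrow> p u = p u0"
  proof -
    have "c u = 0" if "u \<in> I" for u
      using deriv_loc_const[OF dp[OF that] oI that] cst by blast
    hence "(\<lambda>_. 1::real) u0 = 0" using cz[of "\<lambda>_. 1" u0] u0I by auto
    thus False by simp
  qed
  have polyc: False if "Q \<noteq> 0" "\<And>u. u\<in>I \<Longrightarrow> poly Q (p u) = 0" for Q
    using nonconst poly_const[OF that(1) cI contp that(2) _ u0I] by blast
  have H2: "(la - mu) * c u * s u + k u * (la * p u * c u + mu * q u * s u) = 0" if u: "u \<in> I" for u
  proof -
    have "((\<lambda>u. la * p u * s u - mu * q u * c u) has_real_derivative
        la * c u * s u + la * p u * (c u * k u) - (mu * s u * c u + mu * q u * (-(s u * k u)))) (at u)"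
      by (auto intro!: derivative_eq_intros dp[OF u] dq[OF u] dc[OF u] ds[OF u])
    hence "la * c u * s u + la * p u * (c u * k u) - (mu * s u * c u + mu * q u * (-(s u * k u))) = 0"
      using deriv_loc_const[OF _ oI u] H1 by blast
    thus ?thesis by (simp add: algebra_simps)
  qed
  have Pz: "Pf la mu (p u) (s u) = 0" if u: "u \<in> I" for u
  proof -
    define x y z w kk where "x = p u" and "y = s u" and "z = c u" and "w = q u" and "kk = k u"
    have e1: "la*x*y - mu*w*z = 2" using H1[OF u] by (simp add: x_def y_def z_def w_def)
    have e2: "(la - mu)*z*y + kk*(la*x*z + mu*w*y) = 0" using H2[OF u]
      by (simp add: x_def y_def z_def w_def kk_def)
    have xp: "x > 0" using ppos[OF u] by (simp add: x_def)
    have e3: "kk*x = Kf la mu x y"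
      using H3[OF u] xp unfolding Kf_def by (simp add: x_def y_def kk_def field_simps) algebra
    have e4: "z^2 + y^2 = 1" using cs[OF u] by (simp add: z_def y_def)
    have "(la-mu)*(1-y^2)*y + kk*(la*x - 2*y) = z*((la - mu)*z*y + kk*(la*x*z + mu*w*y))
       - (la-mu)*y*(z^2+y^2-1) - kk*la*x*(z^2+y^2-1) + kk*y*(la*x*y - mu*w*z - 2)" by algebra
    hence f1: "(la-mu)*(1-y^2)*y + kk*(la*x - 2*y) = 0" using e1 e2 e4 by simp
    have "Pf la mu x y = x*((la-mu)*(1-y^2)*y + kk*(la*x - 2*y)) + (Kf la mu x y - kk*x)*(la*x - 2*y)"
      unfolding Pf_def Kf_def by algebra
    hence "Pf la mu x y = 0" using f1 e3 by simp
    thus ?thesis by (simp add: x_def y_def)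
  qed
  have kx: "k u * p u = Kf la mu (p u) (s u)" if u: "u \<in> I" for u
    using H3[OF u] ppos[OF u] unfolding Kf_def by (simp add: field_simps) algebra
  have cT: "c u * Tf la mu (p u) (s u) = 0" if u: "u \<in> I" for u
  proof -
    have D: "((\<lambda>u. Pf la mu (p u) (s u)) has_real_derivative
        Ppf la mu (p u) (s u) * c u + Psf la mu (p u) (s u) * (c u * k u)) (at u)"
      unfolding Pf_def Ppf_def Psf_def
      by (auto intro!: derivative_eq_intros dp[OF u] ds[OF u]) algebra
    have "Ppf la mu (p u) (s u) * c u + Psf la mu (p u) (s u) * (c u * k u) = 0"
      using deriv_loc_const[OF D oI u] Pz by blast
    moreover have "c u * Tf la mu (p u) (s u) = p u * (Ppf la mu (p u) (s u) * c u + Psf la mu (p u) (s u) * (c u * k u))"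
      unfolding T_eq kx[OF u, symmetric] by algebra
    ultimately show ?thesis by simp
  qed
  have Tz: "Tf la mu (p u) (s u) = 0" if u: "u \<in> I" for u
  proof (rule cz[OF _ cT u])
    fix v assume v: "v \<in> I"
    show "isCont (\<lambda>u. Tf la mu (p u) (s u)) v"
      unfolding Tf_def by (intro continuous_intros iscp[OF v] iscs[OF v])
  qed
  show ?thesis
  proof (cases "la = mu")
    case True
    have la0: "la \<noteq> 0" using H1[OF u0I] True by auto
    have pq: "p u * c u + q u * s u = 0" if u: "u \<in> I" for u
    proof -
      have "k u * la * (p u * c u + q u * s u) = 0" using H2[OF u] True by (simp add: algebra_simps)
      thus ?thesis using knz[OF u] la0 by simp
    qed
    have "\<exists>C0. \<forall>u\<in>I. (p u)^2 + (q u)^2 = C0"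
    proof (rule has_field_derivative_zero_constant[OF cvI])
      fix u assume u: "u \<in> I"
      have "((\<lambda>u. (p u)^2 + (q u)^2) has_real_derivative 2 * (p u * c u + q u * s u)) (at u)"
        by (auto intro!: derivative_eq_intros dp[OF u] dq[OF u] simp: algebra_simps)
      thus "((\<lambda>u. (p u)^2 + (q u)^2) has_real_derivative 0) (at u within I)"
        using pq[OF u] by (simp add: has_field_derivative_at_within)
    qed
    then obtain C0 where C0: "\<And>u. u\<in>I \<Longrightarrow> (p u)^2 + (q u)^2 = C0" by blast
    have "C0 > 0" using C0[OF u0I] ppos[OF u0I]
      by (metis add_pos_nonneg zero_less_power zero_le_power2)
    hence r: "sqrt C0 > 0" "(sqrt C0)^2 = C0" by auto
    show ?thesis
      by (rule disjI1, rule exI[of _ "sqrt C0"]) (use r C0 in \<open>auto simp: I_def\<close>)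
  next
    case lamu: False
    show ?thesis
    proof (cases "mu = 0")
      case mu0: True
      have la0: "la \<noteq> 0" using lamu mu0 by auto
      define c0 where "c0 = 2 / la"
      have c0nz: "c0 \<noteq> 0" using la0 by (simp add: c0_def)
      have ps: "p u * s u = c0" if u: "u \<in> I" for u
        using H1[OF u] mu0 la0 by (simp add: c0_def field_simps)
      have kk: "k u = - s u / p u" if u: "u \<in> I" for u
        using H3[OF u] H1[OF u] mu0 by simp
      have kp: "k u * p u = - s u" if u: "u \<in> I" for u
        using kk[OF u] ppos[OF u] by simp
      define I1 where "I1 u = p u * cosh (q u / c0) - p u * c u * sinh (q u / c0)" for u
      define I2 where "I2 u = p u * c u * cosh (q u / c0) - p u * sinh (q u / c0)" for u
      have sc: "s u / c0 = 1 / p u" if u: "u \<in> I" for u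
        using ps[OF u] ppos[OF u] c0nz by (auto simp: field_simps)
      have pk: "p u * (s u * k u) = -((s u)^2)" if u: "u \<in> I" for u
        using kk[OF u] ppos[OF u] by (simp add: power2_eq_square)
      have "\<exists>al. \<forall>u\<in>I. I1 u = al"
      proof (rule has_field_derivative_zero_constant[OF cvI])
        fix u assume u: "u \<in> I"
        have "((\<lambda>u. I1 u) has_real_derivative 0) (at u)"
          unfolding I1_def
          using ps[OF u] kp[OF u] cs[OF u]
          apply (auto intro!: derivative_eq_intros dp[OF u] dq[OF u] dc[OF u] simp: c0nz field_simps)
          apply algebra
          done
        thus "(I1 has_real_derivative 0) (at u within I)" by (simp add: has_field_derivative_at_within)
      qed
      then obtain al where al: "\<And>u. u\<in>I \<Longrightarrow> I1 u = al" by blast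
      have "\<exists>be. \<forall>u\<in>I. I2 u = be"
      proof (rule has_field_derivative_zero_constant[OF cvI])
        fix u assume u: "u \<in> I"
        have "((\<lambda>u. I2 u) has_real_derivative 0) (at u)"
          unfolding I2_def
          using ps[OF u] kp[OF u] cs[OF u]
          apply (auto intro!: derivative_eq_intros dp[OF u] dq[OF u] dc[OF u] simp: c0nz field_simps)
          apply algebra
          done
        thus "(I2 has_real_derivative 0) (at u within I)" by (simp add: has_field_derivative_at_within)
      qed
      then obtain be where be: "\<And>u. u\<in>I \<Longrightarrow> I2 u = be" by blast
      have hp: "cosh x ^ 2 - sinh x ^ 2 = 1" for x :: real by (rule hyperbolic_pythagoras)
      have prep: "p u = al * cosh (q u / c0) + be * sinh (q u / c0)" if u: "u \<in> I" for u
      proof -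
        have "al * cosh (q u / c0) + be * sinh (q u / c0) = p u * (cosh (q u / c0) ^ 2 - sinh (q u / c0) ^ 2)"
          unfolding al[OF u, symmetric] be[OF u, symmetric] I1_def I2_def
          by (simp add: algebra_simps power2_eq_square)
        thus ?thesis using hp by simp
      qed
      have albe: "al^2 - be^2 = c0^2"
      proof -
        have "al^2 - be^2 = (p u0)^2 * (1 - (c u0)^2) * (cosh (q u0 / c0) ^ 2 - sinh (q u0 / c0) ^ 2)"
          unfolding al[OF u0I, symmetric] be[OF u0I, symmetric] I1_def I2_def
          by (simp add: algebra_simps power2_eq_square)
        also have "\<dots> = (p u0 * s u0)^2"
        proof -
          have "1 - (c u0)^2 = (s u0)^2" using cs[OF u0I] by simp
          thus ?thesis using hp[of "q u0 / c0"] by (simp add: power_mult_distrib)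
        qed
        finally show ?thesis using ps[OF u0I] by simp
      qed
      define C where "C = \<bar>c0\<bar>"
      have Cpos: "C > 0" using c0nz by (simp add: C_def)
      have C2: "C^2 = c0^2" by (simp add: C_def)
      have bal: "\<bar>be\<bar> < \<bar>al\<bar>"
      proof -
        have "be^2 < al^2" using albe c0nz by (simp add: algebra_simps)
        thus ?thesis using power_less_imp_less_base[of "\<bar>be\<bar>" 2 "\<bar>al\<bar>"] by simp
      qed
      have shc: "\<bar>sinh x\<bar> \<le> cosh x" for x :: real
        using sinh_less_cosh_real[of x] sinh_less_cosh_real[of "-x"] by (simp add: abs_if)
      have alpos: "al > 0"
      proof (rule ccontr)
        assume "\<not> al > 0"
        hence "\<bar>be\<bar> \<le> - al" using bal by simp
        define x where "x = q u0 / c0"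
        have "be * sinh x \<le> \<bar>be\<bar> * \<bar>sinh x\<bar>" by (metis abs_ge_self abs_mult)
        also have "\<dots> \<le> (- al) * cosh x"
          using \<open>\<bar>be\<bar> \<le> - al\<close> shc[of x] by (intro mult_mono) auto
        finally have "al * cosh x + be * sinh x \<le> 0" by simp
        thus False using prep[OF u0I] ppos[OF u0I] by (simp add: x_def)
      qed
      have abp: "al + be > 0" "al - be > 0" using bal alpos by linarith+
      have prodC: "(al + be) * (al - be) = C^2" using albe C2 by (simp add: algebra_simps power2_eq_square)
      define t where "t = ln ((al + be) / C)"
      have et: "exp t = (al + be) / C" using abp Cpos by (simp add: t_def)
      have emt: "exp (-t) = (al - be) / C"
      proof -
        have "exp (-t) = C / (al + be)" using et by (simp add: exp_minus inverse_eq_divide)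
        also have "\<dots> = (al - be) / C" using abp Cpos prodC
          by (simp add: field_simps power2_eq_square)
        finally show ?thesis .
      qed
      have cht: "C * cosh t = al" using et emt Cpos by (simp add: cosh_field_def field_simps)
      have sht: "C * sinh t = be" using et emt Cpos by (simp add: sinh_field_def field_simps)
      define d where "d = - c0 * t"
      have "p u = C * cosh ((q u - d) / C)" if u: "u \<in> I" for u
      proof -
        have "p u = C * cosh (t + q u / c0)"
          unfolding prep[OF u] cosh_add cht[symmetric] sht[symmetric] by (simp add: algebra_simps)
        also have "cosh (t + q u / c0) = cosh ((q u - d) / C)"
        proof -
          have "(q u - d) / C = (c0 / C) * (t + q u / c0)" using c0nz Cpos
            by (simp add: d_def field_simps)
          moreover have "\<bar>c0 / C\<bar> = 1" using c0nz by (simp add: C_def)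
          ultimately show ?thesis using c0nz by (simp add: abs_mult)
        qed
        finally show ?thesis .
      qed
      thus ?thesis using Cpos unfolding I_def by blast
    next
      case mu0: False
      show ?thesis
      proof (cases "mu = 2 * la")
        case True
        have la0: "la \<noteq> 0" using mu0 True by auto
        define Q where "Q = [:-16, 0, 36 * la^2, 0, -20 * la^4, 0, 3 * la^6:]"
        have "Q \<noteq> 0" by (simp add: Q_def)
        moreover have "poly Q (p u) = 0" if u: "u \<in> I" for u
        proof -
          define x y where "x = p u" and "y = s u"
          have y0: "y \<noteq> 0" and x0: "x > 0" using snz[OF u] ppos[OF u] by (auto simp: x_def y_def)
          have "y * (la^3 * x^3 - 2 * la^2 * x^2 * y + la * x * y^2 - 2 * la * x + 2 * y) = 0" using Pz[OF u] cert2(1)[of la x y] True by (simp add: x_def y_def)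
          hence h1: "(la^3 * x^3 - 2 * la^2 * x^2 * y + la * x * y^2 - 2 * la * x + 2 * y) = 0" using y0 by simp
          have "y * (la^5 * x^5 - 4 * la^4 * x^4 * y + 3 * la^3 * x^3 * y^2 + 4 * la^2 * x^2 * y - 2 * la * x * y^2 - 4 * y) = 0" using Tz[OF u] cert2(2)[of la x y] True by (simp add: x_def y_def)
          hence h2: "(la^5 * x^5 - 4 * la^4 * x^4 * y + 3 * la^3 * x^3 * y^2 + 4 * la^2 * x^2 * y - 2 * la * x * y^2 - 4 * y) = 0" using y0 by simp
          have "(0 - 4) * la^5 * x^5 * (3 * la^6 * x^6 - 20 * la^4 * x^4 + 36 * la^2 * x^2 - 16) = 0"
            using cert2(3)[of la x y] h1 h2 by simp
          hence "3 * la^6 * x^6 - 20 * la^4 * x^4 + 36 * la^2 * x^2 - 16 = 0" using la0 x0 by simp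
          moreover have "poly Q x = 3 * la^6 * x^6 - 20 * la^4 * x^4 + 36 * la^2 * x^2 - 16"
            by (simp add: Q_def algebra_simps power2_eq_square power3_eq_cube power4_eq_xxxx) algebra
          ultimately show ?thesis by (simp add: x_def)
        qed
        ultimately show ?thesis using polyc by blast
      next
        case m2: False
        define c9 c11 c13 where "c9 = (8 * la^5 * mu^4 - 36 * la^4 * mu^5 + 64 * la^3 * mu^6 - 56 * la^2 * mu^7 + 24 * la * mu^8 - 4 * mu^9)" and "c11 = (8 * la^8 * mu^3 - 46 * la^7 * mu^4 + 109 * la^6 * mu^5 - 136 * la^5 * mu^6 + 94 * la^4 * mu^7 - 34 * la^3 * mu^8 + 5 * la^2 * mu^9)" and "c13 = (0 - 2 * la^10 * mu^3 + 11 * la^9 * mu^4 - 25 * la^8 * mu^5 + 30 * la^7 * mu^6 - 20 * la^6 * mu^7 + 7 * la^5 * mu^8 - la^4 * mu^9)"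
        have c9nz: "c9 \<noteq> 0" unfolding c9_def c9_fact using mu0 lamu m2 by auto
        define Q where "Q = [:c9, 0, c11, 0, c13:]"
        have "Q \<noteq> 0" using c9nz by (simp add: Q_def)
        moreover have "poly Q (p u) = 0" if u: "u \<in> I" for u
        proof -
          define x y where "x = p u" and "y = s u"
          have x0: "x > 0" using ppos[OF u] by (auto simp: x_def)
          have "x^9 * (c9 + c11 * x^2 + c13 * x^4) = 0"
            using cert1[of la mu x y] Pz[OF u] Tz[OF u] unfolding c9_def c11_def c13_def
            by (simp add: x_def y_def)
          hence "c9 + c11 * x^2 + c13 * x^4 = 0" using x0 by simp
          moreover have "poly Q x = c9 + c11 * x^2 + c13 * x^4"
            by (simp add: Q_def algebra_simps power2_eq_square power4_eq_xxxx)
          ultimately show ?thesis by (simp add: x_def)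
        qed
        ultimately show ?thesis using polyc by blast
      qed
    qed
  qed
qed


lemma deriv_loc_const':
  assumes "(f has_real_derivative f') (at x)" "open S" "x \<in> S" "\<And>y. y\<in>S \<Longrightarrow> f y = k"
  shows "f' = 0"
proof -
  have "((\<lambda>_. k) has_real_derivative f') (at x)"
    by (rule has_field_derivative_transform_within_open[OF assms(1-3)]) (simp add: assms(4))
  moreover have "((\<lambda>_. k) has_real_derivative 0) (at x)" by simp
  ultimately show ?thesis using DERIV_unique by blast
qed

lemma alg1:
  fixes K y z g q2 p2 kd :: real
  assumes "K \<noteq> 0" "y \<noteq> 0"
  shows "z*(-g*(y/K) - (q2*K - y*kd)/K^2) - y*(-g*(z/K) - (p2*K - z*kd)/K^2 + 1/y)
        = -(z*q2 - y*p2)/K - 1"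
  using assms by (simp add: field_simps power2_eq_square)

lemma alg3:
  fixes kk x y z w kd Gd mu :: real
  assumes "kk \<noteq> 0" "x \<noteq> 0" "y \<noteq> 0"
    and "-(Gd/(2*(kk*x*y)))*(y/kk) - (z*kk*kk - y*kd)/kk^2 = mu*w"
    and "Gd = kd*x*y + kk*z*y + kk*x*(z*kk)"
  shows "x*y*kd - kk*z*y - 3*kk^2*x*z - 2*mu*w*kk^2*x = 0"
proof -
  have L: "(-(Gd/(2*(kk*x*y)))*(y/kk) - (z*kk*kk - y*kd)/kk^2) * (2*kk^2*x) = -Gd - (z*kk*kk - y*kd)*(2*x)"
    using assms(1-3) by (simp add: field_simps power2_eq_square)
  hence "mu*w*(2*kk^2*x) = -Gd - (z*kk*kk - y*kd)*(2*x)" unfolding assms(4) .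
  thus ?thesis unfolding assms(5) by (simp add: algebra_simps power2_eq_square)
qed

lemma mid:
  fixes p q p1 p2 p3 q1 q2 q3 :: "real \<Rightarrow> real" and la mu a b :: real
  defines "kap \<equiv> \<lambda>u. p1 u * q2 u - p2 u * q1 u"
    and "kapd \<equiv> \<lambda>u. p1 u * q3 u - p3 u * q1 u"
    and "G \<equiv> \<lambda>u. (p1 u * q2 u - p2 u * q1 u) * p u * q1 u"
    and "Gd \<equiv> \<lambda>u. (p1 u * q3 u - p3 u * q1 u) * p u * q1 u + (p1 u * q2 u - p2 u * q1 u) * p1 u * q1 u
                  + (p1 u * q2 u - p2 u * q1 u) * p u * q2 u"
  assumes ab: "a < b"
    and dp: "\<And>u. u\<in>{a<..<b} \<Longrightarrow> (p has_real_derivative p1 u) (at u)"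
    and dp1: "\<And>u. u\<in>{a<..<b} \<Longrightarrow> (p1 has_real_derivative p2 u) (at u)"
    and dp2: "\<And>u. u\<in>{a<..<b} \<Longrightarrow> (p2 has_real_derivative p3 u) (at u)"
    and dq: "\<And>u. u\<in>{a<..<b} \<Longrightarrow> (q has_real_derivative q1 u) (at u)"
    and dq1: "\<And>u. u\<in>{a<..<b} \<Longrightarrow> (q1 has_real_derivative q2 u) (at u)"
    and dq2: "\<And>u. u\<in>{a<..<b} \<Longrightarrow> (q2 has_real_derivative q3 u) (at u)"
    and arc: "\<And>u. u\<in>{a<..<b} \<Longrightarrow> (p1 u)^2 + (q1 u)^2 = 1"
    and knz: "\<And>u. u\<in>{a<..<b} \<Longrightarrow> kap u \<noteq> 0"
    and snz: "\<And>u. u\<in>{a<..<b} \<Longrightarrow> q1 u \<noteq> 0"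
    and ppos: "\<And>u. u\<in>{a<..<b} \<Longrightarrow> p u > 0"
    and Eq1: "\<And>u. u\<in>{a<..<b} \<Longrightarrow> - (Gd u / (2 * G u)) * (p1 u / kap u)
                 - (p2 u * kap u - p1 u * kapd u) / (kap u)^2 + 1 / q1 u = la * p u"
    and Eq3: "\<And>u. u\<in>{a<..<b} \<Longrightarrow> - (Gd u / (2 * G u)) * (q1 u / kap u)
                 - (q2 u * kap u - q1 u * kapd u) / (kap u)^2 = mu * q u"
  shows "(\<exists>r>0. \<forall>u\<in>{a<..<b}. (p u)^2 + (q u)^2 = r^2) \<or>
         (\<exists>C>0. \<exists>d. \<forall>u\<in>{a<..<b}. p u = C * cosh ((q u - d) / C))"
proof -
  define I where "I = {a<..<b}"
  have oI: "open I" by (simp add: I_def)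
  note dp = dp[folded I_def] and dq = dq[folded I_def] and dp1 = dp1[folded I_def] and dq1 = dq1[folded I_def]
    and dp2 = dp2[folded I_def] and dq2 = dq2[folded I_def] and arc = arc[folded I_def]
    and knz = knz[folded I_def] and snz = snz[folded I_def]
    and ppos = ppos[folded I_def] and Eq1 = Eq1[folded I_def] and Eq3 = Eq3[folded I_def]
  have A1: "p1 u * p2 u + q1 u * q2 u = 0" if u: "u \<in> I" for u
  proof -
    have "((\<lambda>u. (p1 u)^2 + (q1 u)^2) has_real_derivative 2 * (p1 u * p2 u + q1 u * q2 u)) (at u)"
      by (auto intro!: derivative_eq_intros dp1[OF u] dq1[OF u] simp: algebra_simps)
    hence "2 * (p1 u * p2 u + q1 u * q2 u) = 0" using deriv_loc_const'[OF _ oI u] arc by blast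
    thus ?thesis by simp
  qed
  have A2: "(p2 u)^2 + p1 u * p3 u + (q2 u)^2 + q1 u * q3 u = 0" if u: "u \<in> I" for u
  proof -
    have "((\<lambda>u. p1 u * p2 u + q1 u * q2 u) has_real_derivative
          (p2 u)^2 + p1 u * p3 u + (q2 u)^2 + q1 u * q3 u) (at u)"
      by (auto intro!: derivative_eq_intros dp1[OF u] dq1[OF u] dp2[OF u] dq2[OF u]
          simp: algebra_simps power2_eq_square)
    thus ?thesis using deriv_loc_const'[OF _ oI u] A1 by blast
  qed
  have rp2: "p2 u = - (q1 u * kap u)" if u: "u \<in> I" for u
  proof -
    have "p2 u + q1 u * kap u = p1 u * (p1 u * p2 u + q1 u * q2 u) - p2 u * ((p1 u)^2 + (q1 u)^2 - 1)"
      unfolding kap_def by algebra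
    thus ?thesis using A1[OF u] arc[OF u] by simp
  qed
  have rq2: "q2 u = p1 u * kap u" if u: "u \<in> I" for u
  proof -
    have "q2 u - p1 u * kap u = q1 u * (p1 u * p2 u + q1 u * q2 u) - q2 u * ((p1 u)^2 + (q1 u)^2 - 1)"
      unfolding kap_def by algebra
    thus ?thesis using A1[OF u] arc[OF u] by simp
  qed
  have rp3: "p3 u = - (p1 u * (kap u)^2) - q1 u * kapd u" if u: "u \<in> I" for u
  proof -
    have "(p2 u)^2 + (q2 u)^2 = (kap u)^2" using rp2[OF u] rq2[OF u] arc[OF u]
      by (simp add: power_mult_distrib algebra_simps) (metis distrib_left mult.right_neutral)
    hence e: "p1 u * p3 u + q1 u * q3 u = -((kap u)^2)" using A2[OF u] by simp
    have "p3 u = p1 u * (p1 u * p3 u + q1 u * q3 u) - q1 u * kapd u - p3 u * ((p1 u)^2 + (q1 u)^2 - 1)"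
      unfolding kapd_def by algebra
    thus ?thesis using e arc[OF u] by simp
  qed
  have rq3: "q3 u = - (q1 u * (kap u)^2) + p1 u * kapd u" if u: "u \<in> I" for u
  proof -
    have "(p2 u)^2 + (q2 u)^2 = (kap u)^2" using rp2[OF u] rq2[OF u] arc[OF u]
      by (simp add: power_mult_distrib algebra_simps) (metis distrib_left mult.right_neutral)
    hence e: "p1 u * p3 u + q1 u * q3 u = -((kap u)^2)" using A2[OF u] by simp
    have "q3 u = q1 u * (p1 u * p3 u + q1 u * q3 u) + p1 u * kapd u - q3 u * ((p1 u)^2 + (q1 u)^2 - 1)"
      unfolding kapd_def by algebra
    thus ?thesis using e arc[OF u] by simp
  qed
  have H1: "la * p u * q1 u - mu * q u * p1 u = 2" if u: "u \<in> I" for u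
  proof -
    have "p1 u * (- (Gd u / (2 * G u)) * (q1 u / kap u) - (q2 u * kap u - q1 u * kapd u) / (kap u)^2)
        - q1 u * (- (Gd u / (2 * G u)) * (p1 u / kap u)
                 - (p2 u * kap u - p1 u * kapd u) / (kap u)^2 + 1 / q1 u) = -2"
    proof -
      have "p1 u * (- (Gd u / (2 * G u)) * (q1 u / kap u) - (q2 u * kap u - q1 u * kapd u) / (kap u)^2)
        - q1 u * (- (Gd u / (2 * G u)) * (p1 u / kap u)
                 - (p2 u * kap u - p1 u * kapd u) / (kap u)^2 + 1 / q1 u)
          = - (p1 u * q2 u - q1 u * p2 u) / kap u - 1"
        by (rule alg1[OF knz[OF u] snz[OF u], of "p1 u" "Gd u / (2 * G u)" "q2 u" "kapd u" "p2 u"])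
      also have "\<dots> = -2"
      proof -
        have e: "p1 u * q2 u - q1 u * p2 u = kap u" unfolding kap_def by (simp add: mult.commute)
        show ?thesis unfolding e using knz[OF u] by simp
      qed
      finally show ?thesis .
    qed
    hence "p1 u * (mu * q u) - q1 u * (la * p u) = - 2" using Eq1[OF u] Eq3[OF u] by simp
    thus ?thesis by (simp add: algebra_simps)
  qed
  have H2r: "la * (p1 u * q1 u + p u * q2 u) - mu * (q1 u * p1 u + q u * p2 u) = 0" if u: "u \<in> I" for u
  proof -
    have "((\<lambda>u. la * p u * q1 u - mu * q u * p1 u) has_real_derivative
          la * (p1 u * q1 u + p u * q2 u) - mu * (q1 u * p1 u + q u * p2 u)) (at u)"
      by (auto intro!: derivative_eq_intros dp[OF u] dq[OF u] dp1[OF u] dq1[OF u] simp: algebra_simps)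
    thus ?thesis using deriv_loc_const'[OF _ oI u] H1 by blast
  qed
  have H2dr: "la * (p2 u * q1 u + 2 * p1 u * q2 u + p u * q3 u) - mu * (q2 u * p1 u + 2 * q1 u * p2 u + q u * p3 u) = 0"
    if u: "u \<in> I" for u
  proof -
    have "((\<lambda>u. la * (p1 u * q1 u + p u * q2 u) - mu * (q1 u * p1 u + q u * p2 u)) has_real_derivative
          la * (p2 u * q1 u + 2 * p1 u * q2 u + p u * q3 u) - mu * (q2 u * p1 u + 2 * q1 u * p2 u + q u * p3 u)) (at u)"
      by (auto intro!: derivative_eq_intros dp[OF u] dq[OF u] dp1[OF u] dq1[OF u] dp2[OF u] dq2[OF u]
          simp: algebra_simps)
    thus ?thesis using deriv_loc_const'[OF _ oI u] H2r by blast
  qed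
  have H3: "kap u = mu - q1 u / p u - (la - mu) * (la * p u * q1 u - 2)" if u: "u \<in> I" for u
  proof -
    define x y z w kk kd where "x = p u" and "y = q1 u" and "z = p1 u" and "w = q u" and "kk = kap u"
      and "kd = kapd u"
    have x0: "x \<noteq> 0" using ppos[OF u] by (simp add: x_def)
    have y0: "y \<noteq> 0" using snz[OF u] by (simp add: y_def)
    have k0: "kk \<noteq> 0" using knz[OF u] by (simp add: kk_def)
    have h1: "la*x*y - mu*w*z - 2 = 0" using H1[OF u] by (simp add: x_def y_def z_def w_def)
    have arc0: "z^2 + y^2 - 1 = 0" using arc[OF u] by (simp add: z_def y_def)
    have h2: "(la-mu)*z*y + kk*(la*x*z + mu*w*y) = 0"
      using H2r[OF u] rp2[OF u] rq2[OF u] by (simp add: x_def y_def z_def w_def kk_def algebra_simps)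
    have h2d: "la*(-(y^2*kk) + 2*z^2*kk - x*y*kk^2) - mu*(z^2*kk - 2*y^2*kk - w*z*kk^2) + kd*(la*x*z + mu*w*y) = 0"
      using H2dr[OF u] rp2[OF u] rq2[OF u] rp3[OF u] rq3[OF u]
      by (simp add: x_def y_def z_def w_def kk_def kd_def algebra_simps power2_eq_square)
    have e3: "x*y*kd - kk*z*y - 3*kk^2*x*z - 2*mu*w*kk^2*x = 0"
    proof (rule alg3[OF k0 x0 y0])
      have Gu: "G u = kap u * p u * q1 u" unfolding G_def kap_def by simp
      have Gdu: "Gd u = kapd u * p u * q1 u + kap u * p1 u * q1 u + kap u * p u * q2 u"
        unfolding Gd_def kap_def kapd_def by simp
      show "-(Gd u/(2*(kk*x*y)))*(y/kk) - (z*kk*kk - y*kd)/kk^2 = mu*w"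
        unfolding x_def y_def z_def w_def kk_def kd_def
        using Eq3[OF u] unfolding Gu rq2[OF u] by simp
      show "Gd u = kd*x*y + kk*z*y + kk*x*(z*kk)"
        unfolding x_def y_def z_def w_def kk_def kd_def Gdu rq2[OF u] by simp
    qed
    define T0 where "T0 = 2*kk*x - 2*(mu*x - y - (la-mu)*(la*x*y - 2)*x)"
    have "x*y*(la*(-(y^2*kk) + 2*z^2*kk - x*y*kk^2) - mu*(z^2*kk - 2*y^2*kk - w*z*kk^2) + kd*(la*x*z + mu*w*y))
        - (la*x*z + mu*w*y)*(x*y*kd - kk*z*y - 3*kk^2*x*z - 2*mu*w*kk^2*x)
        = kk*((3*x*z + 2*mu*w*x)*((la-mu)*z*y + kk*(la*x*z + mu*w*y))
           + y*(2*mu*x*(z^2 + y^2 - 1) - T0 - x*kk*(la*x*y - mu*w*z - 2) - y*(la*x*y - mu*w*z - 2)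
                + 2*x*(la-mu)*(la*x*y - mu*w*z - 2)))"
      unfolding T0_def by algebra
    hence "kk * (y * (- T0)) = 0" using h1 arc0 h2 h2d e3 by simp
    hence "T0 = 0" using k0 y0 by simp
    hence "kk = mu - y/x - (la - mu) * (la * x * y - 2)" using x0 unfolding T0_def
      by (simp add: field_simps)
    thus ?thesis by (simp add: x_def y_def w_def kk_def)
  qed
  show ?thesis
  proof (rule core[OF ab, of p p1 q q1 kap la mu])
    fix u assume u: "u \<in> {a<..<b}"
    hence u': "u \<in> I" by (simp add: I_def)
    show "(p has_real_derivative p1 u) (at u)" by (rule dp[OF u'])
    show "(q has_real_derivative q1 u) (at u)" by (rule dq[OF u'])
    show "(p1 has_real_derivative -(q1 u * kap u)) (at u)" using dp1[OF u'] rp2[OF u'] by simp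
    show "(q1 has_real_derivative p1 u * kap u) (at u)" using dq1[OF u'] rq2[OF u'] by simp
    show "(p1 u)^2 + (q1 u)^2 = 1" by (rule arc[OF u'])
    show "kap u \<noteq> 0" by (rule knz[OF u'])
    show "q1 u \<noteq> 0" by (rule snz[OF u'])
    show "p u > 0" by (rule ppos[OF u'])
    show "la * p u * q1 u - mu * q u * p1 u = 2" by (rule H1[OF u'])
    show "kap u = mu - q1 u / p u - (la - mu) * (la * p u * q1 u - 2)" by (rule H3[OF u'])
  qed
qed


lemma norm3: "norm (x :: real^3) = sqrt ((x$1)^2 + (x$2)^2 + (x$3)^2)"
  by (simp add: norm_eq_sqrt_inner inner_vec_def sum_3 power2_eq_square)

lemma rev_surf_nth: "rev_surf p q u v $ 1 = p u * cos v" "rev_surf p q u v $ 2 = p u * sin v"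
  "rev_surf p q u v $ 3 = q u"
  by (simp_all add: rev_surf_def)

lemma angle_exists:
  fixes x1 x2 P :: real
  assumes "sqrt (x1^2 + x2^2) = P" "P > 0"
  shows "\<exists>v. 0 \<le> v \<and> v < 2*pi \<and> x1 = P * cos v \<and> x2 = P * sin v"
proof -
  have "x1^2 + x2^2 = P^2" using assms(1) real_sqrt_pow2[of "x1^2+x2^2"] by auto
  hence "(x1/P)^2 + (x2/P)^2 = 1" using assms(2) by (simp add: field_simps power_divide)
  then obtain v where v: "0 \<le> v" "v < 2*pi" "x1/P = cos v" "x2/P = sin v"
    using sincos_total_2pi by blast
  thus ?thesis using assms(2) by (intro exI[of _ v]) (auto simp: field_simps)
qed

lemma sqrt_eq_iff':
  fixes s t :: real
  assumes "0 \<le> s" "0 < t"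
  shows "sqrt s = t \<longleftrightarrow> s = t^2"
  using assms by (auto simp: real_sqrt_pow2)

lemma image_translate_iff: "x \<in> (\<lambda>y. y + t) ` S \<longleftrightarrow> x - t \<in> (S :: (real^3) set)"
  by (auto intro!: image_eqI[of _ _ "x - t"])

lemma inj_deriv:
  fixes q q1 :: "real \<Rightarrow> real"
  assumes "\<And>u. u \<in> {a<..<b} \<Longrightarrow> (q has_real_derivative q1 u) (at u)"
    and "\<And>u. u \<in> {a<..<b} \<Longrightarrow> q1 u \<noteq> 0"
  shows "inj_on q {a<..<b}"
proof (rule inj_onI, rule ccontr)
  fix x y assume x: "x \<in> {a<..<b}" and y: "y \<in> {a<..<b}" and e: "q x = q y" and ne: "x \<noteq> y"
  have "\<exists>z. min x y < z \<and> z < max x y \<and> q (max x y) - q (min x y) = (max x y - min x y) * q1 z"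
  proof (rule MVT2)
    show "min x y < max x y" using ne by (simp add: min_def max_def)
  next
    fix xa assume "min x y \<le> xa" "xa \<le> max x y"
    hence "xa \<in> {a<..<b}" using x y by (auto simp: min_def max_def split: if_splits)
    thus "DERIV q xa :> q1 xa" by (rule assms(1))
  qed
  then obtain z where z: "min x y < z" "z < max x y" "q (max x y) - q (min x y) = (max x y - min x y) * q1 z"
    by blast
  have "q (max x y) - q (min x y) = 0" using e by (simp add: max_def min_def)
  hence "q1 z = 0" using z(3) ne by (simp add: max_def min_def split: if_splits)
  moreover have "z \<in> {a<..<b}" using z x y by auto
  ultimately show False using assms(2) by blast
qed

lemma surf_open:
  fixes p q :: "real \<Rightarrow> real" and I :: "real set" and C :: "(real^3) set"
  assumes oq: "open (q ` I)"
    and memC: "\<And>u x. u \<in> I \<Longrightarrow> x$3 = q u \<Longrightarrow> (x \<in> C \<longleftrightarrow> sqrt ((x$1)^2 + (x$2)^2) = p u)"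
    and ppos: "\<And>u. u \<in> I \<Longrightarrow> p u > 0"
  shows "(\<lambda>(u, v). rev_surf p q u v) ` (I \<times> {0..<2*pi}) \<subseteq> C \<and>
         openin (top_of_set C) ((\<lambda>(u, v). rev_surf p q u v) ` (I \<times> {0..<2*pi}))"
proof -
  define S where "S = (\<lambda>(u, v). rev_surf p q u v) ` (I \<times> {0..<2*pi})"
  have inC: "rev_surf p q u v \<in> C" if "u \<in> I" for u v
  proof -
    have "sqrt ((p u * cos v)^2 + (p u * sin v)^2) = p u"
    proof -
      have "(p u * cos v)^2 + (p u * sin v)^2 = (p u)^2"
        by (simp add: power_mult_distrib flip: distrib_left) 
      thus ?thesis using ppos[OF that] by simp
    qed
    thus ?thesis using memC[OF that, of "rev_surf p q u v"] by (simp add: rev_surf_nth)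
  qed
  have sub: "S \<subseteq> C" unfolding S_def using inC by auto
  define T where "T = (\<lambda>x::real^3. x $ 3) -` (q ` I)"
  have oT: "open T" unfolding T_def by (rule open_vimage_vec_nth[OF oq])
  have "S = C \<inter> T"
  proof
    show "S \<subseteq> C \<inter> T" using sub unfolding S_def T_def by (auto simp: rev_surf_nth)
    show "C \<inter> T \<subseteq> S"
    proof
      fix x assume x: "x \<in> C \<inter> T"
      then obtain u where u: "u \<in> I" "x $ 3 = q u" unfolding T_def by auto
      have "sqrt ((x$1)^2 + (x$2)^2) = p u" using memC[OF u] x by auto
      then obtain v where v: "0 \<le> v" "v < 2*pi" "x$1 = p u * cos v" "x$2 = p u * sin v"
        using angle_exists ppos[OF u(1)] by blast
      have "x = rev_surf p q u v"
        using u v by (simp add: vec_eq_iff forall_3 rev_surf_nth)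
      thus "x \<in> S" unfolding S_def using u v by force
    qed
  qed
  hence "openin (top_of_set C) S" using oT by (auto simp: openin_open)
  thus ?thesis using sub unfolding S_def by blast
qed



lemma vec3_eq: "(vector [a, b, c] :: real^3) = a *\<^sub>R vector [1,0,0] + b *\<^sub>R vector [0,1,0] + c *\<^sub>R vector [0,0,1]"
  by (simp add: vec_eq_iff forall_3)

lemma vec3_deriv:
  assumes "(f1 has_real_derivative d1) (at x)" "(f2 has_real_derivative d2) (at x)"
    "(f3 has_real_derivative d3) (at x)"
  shows "((\<lambda>s. vector [f1 s, f2 s, f3 s] :: real^3) has_vector_derivative vector [d1, d2, d3]) (at x)"
proof -
  have "((\<lambda>s. f1 s *\<^sub>R (vector [1,0,0]::real^3) + f2 s *\<^sub>R vector [0,1,0] + f3 s *\<^sub>R vector [0,0,1])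
      has_vector_derivative ((f1 x *\<^sub>R 0 + d1 *\<^sub>R vector [1,0,0] + (f2 x *\<^sub>R 0 + d2 *\<^sub>R vector [0,1,0]))
         + (f3 x *\<^sub>R 0 + d3 *\<^sub>R vector [0,0,1]))) (at x)"
    by (intro has_vector_derivative_add has_vector_derivative_scaleR assms has_vector_derivative_const)
  thus ?thesis by (simp add: vec3_eq[symmetric])
qed

lemma vec3_cong: "a = a' \<Longrightarrow> b = b' \<Longrightarrow> c = c' \<Longrightarrow> (vector [a, b, c] :: real^3) = vector [a', b', c']"
  by simp

lemma cross3_vec: "cross3 (vector [a1, a2, a3]) (vector [b1, b2, b3]) =
   vector [a2 * b3 - a3 * b2, a3 * b1 - a1 * b3, a1 * b2 - a2 * b1]"
  by (simp add: cross3_def)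

lemma inner_vec3: "(vector [a1, a2, a3] :: real^3) \<bullet> vector [b1, b2, b3] = a1 * b1 + a2 * b2 + a3 * b3"
  by (simp add: inner_vec_def sum_3)

lemma norm_vec3: "norm (vector [a1, a2, a3] :: real^3) = sqrt (a1^2 + a2^2 + a3^2)"
  by (simp add: norm_eq_sqrt_inner inner_vec3 power2_eq_square)

lemma scaleR_vec3: "r *\<^sub>R (vector [a1, a2, a3] :: real^3) = vector [r * a1, r * a2, r * a3]"
  by (simp add: vec_eq_iff forall_3)

lemma pd1_eq:
  assumes "open S" "u \<in> S" "\<And>s. s \<in> S \<Longrightarrow> f s v = g s" "(g has_vector_derivative d) (at u)"
  shows "pd 1 f u v = d"
proof -
  have "((\<lambda>s. f s v) has_vector_derivative d) (at u)"
    by (rule has_vector_derivative_transform_within_open[OF assms(4,1,2)]) (simp add: assms(3))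
  thus ?thesis by (simp add: pd_def vector_derivative_at)
qed

lemma pd2_eq:
  assumes "((\<lambda>t. f u t) has_vector_derivative d) (at v)"
  shows "pd 2 f u v = d"
  using assms by (simp add: pd_def vector_derivative_at)

lemma pd1_real:
  fixes f :: "real \<Rightarrow> real \<Rightarrow> real"
  assumes "open S" "u \<in> S" "\<And>s. s \<in> S \<Longrightarrow> f s v = g s" "(g has_real_derivative d) (at u)"
  shows "pd 1 f u v = d"
  apply (rule pd1_eq[OF assms(1) assms(2), where g=g])
  using assms(3) apply simp
  using assms(4) apply (simp add: has_real_derivative_iff_has_vector_derivative)
  done

lemma pd2_real:
  fixes f :: "real \<Rightarrow> real \<Rightarrow> real"
  assumes "((\<lambda>t. f u t) has_real_derivative d) (at v)"
  shows "pd 2 f u v = d"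
  using pd2_eq assms by (simp add: has_real_derivative_iff_has_vector_derivative)

lemma sqrt_abs_deriv:
  assumes "(g has_real_derivative d) (at x)" "g x \<noteq> 0"
  shows "((\<lambda>x. sqrt \<bar>g x\<bar>) has_real_derivative sgn (g x) * d / (2 * sqrt \<bar>g x\<bar>)) (at x)"
proof -
  have gp: "(g x)^2 > 0" using assms(2) by simp
  have h1: "DERIV (\<lambda>x. (g x)^2) x :> 2 * g x * d"
    using assms(1) by (auto intro!: derivative_eq_intros)
  have h2: "DERIV (\<lambda>x. sqrt ((g x)^2)) x :> inverse (sqrt ((g x)^2)) / 2 * (2 * g x * d)"
    by (rule DERIV_chain2[OF DERIV_real_sqrt[OF gp] h1])
  have sp: "sqrt ((g x)^2) > 0" using gp by simp
  have h3: "DERIV (\<lambda>x. sqrt (sqrt ((g x)^2))) x :>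
       inverse (sqrt (sqrt ((g x)^2))) / 2 * (inverse (sqrt ((g x)^2)) / 2 * (2 * g x * d))"
    by (rule DERIV_chain2[OF DERIV_real_sqrt[OF sp] h2])
  have f: "(\<lambda>x. sqrt (sqrt ((g x)^2))) = (\<lambda>x. sqrt \<bar>g x\<bar>)" by (simp add: real_sqrt_abs)
  have v: "inverse (sqrt (sqrt ((g x)^2))) / 2 * (inverse (sqrt ((g x)^2)) / 2 * (2 * g x * d))
      = sgn (g x) * d / (2 * sqrt \<bar>g x\<bar>)"
  proof -
    have "sqrt \<bar>g x\<bar> > 0" using assms(2) by simp
    moreover have "g x / \<bar>g x\<bar> = sgn (g x)" using assms(2) by (simp add: sgn_if)
    ultimately show ?thesis using assms(2) unfolding real_sqrt_abs
      by (simp add: field_simps)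
  qed
  show ?thesis using h3 unfolding f v .
qed

lemma lapform:
  fixes G Gd E Ed T :: real
  assumes "G \<noteq> 0"
  shows "-(1 / sqrt \<bar>G\<bar>) * ((sgn G * Gd / (2 * sqrt \<bar>G\<bar>) * E + sqrt \<bar>G\<bar> * Ed) - sqrt \<bar>G\<bar> * T)
     = -(Gd / (2 * G)) * E - Ed + T"
proof -
  define W where "W = sqrt \<bar>G\<bar>"
  have w: "W > 0" using assms by (simp add: W_def)
  have ww: "W * W = \<bar>G\<bar>" by (simp add: W_def)
  have e1: "-(1 / W) * ((sgn G * Gd / (2 * W) * E + W * Ed) - W * T)
      = -(sgn G / (W * W)) * Gd * E / 2 - Ed + T" using w by (simp add: field_simps)
  have e2: "sgn G / (W * W) = 1 / G" using assms unfolding ww by (simp add: sgn_if)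
  show ?thesis unfolding W_def[symmetric] e1 e2 by simp
qed



theorem mainTheorem1:
  fixes p q :: "real \<Rightarrow> real" and a b :: real and A :: "real^3^3"
  assumes smooth_p: "smooth_real_on {a<..<b} p"
      and smooth_q: "smooth_real_on {a<..<b} q"
      and pos: "\<forall>u\<in>{a<..<b}. p u > 0"
      and arclen: "\<forall>u\<in>{a<..<b}. (deriv p u)^2 + (deriv q u)^2 = 1"
      and K_nz: "\<forall>u\<in>{a<..<b}. \<forall>v\<in>{0..<2*pi}. gauss_curv (rev_surf p q) u v \<noteq> 0"
      and eq: "\<forall>u\<in>{a<..<b}. \<forall>v\<in>{0..<2*pi}.
                 (\<chi> k. laplace_II (rev_surf p q) (\<lambda>u' v'. rev_surf p q u' v' $ k) u v)
                 = A *v rev_surf p q u v"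
  shows "\<exists>C. (is_catenoid C \<or> is_sphere C)
             \<and> (\<lambda>(u, v). rev_surf p q u v) ` ({a<..<b} \<times> {0..<2*pi}) \<subseteq> C
             \<and> openin (top_of_set C) ((\<lambda>(u, v). rev_surf p q u v) ` ({a<..<b} \<times> {0..<2*pi}))"
proof (cases "a < b")
  case False
  hence e: "{a<..<b} = ({}::real set)" by auto
  have "is_sphere (sphere (0::real^3) 1)" unfolding is_sphere_def
    by (intro exI[of _ 0] exI[of _ 1]) auto
  thus ?thesis using e by (intro exI[of _ "sphere (0::real^3) 1"]) auto
next
  case ab: True
  define I where "I = {a<..<b}"
  have oI: "open I" by (simp add: I_def)
  define p1 where "p1 = deriv p"
  define p2 where "p2 = deriv p1"
  define p3 where "p3 = deriv p2"
  define q1 where "q1 = deriv q"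
  define q2 where "q2 = deriv q1"
  define q3 where "q3 = deriv q2"
  have sp: "\<forall>n. \<forall>x\<in>I. ((deriv ^^ n) p has_real_derivative (deriv ^^ Suc n) p x) (at x)"
    using smooth_p unfolding smooth_real_on_def I_def .
  have sq: "\<forall>n. \<forall>x\<in>I. ((deriv ^^ n) q has_real_derivative (deriv ^^ Suc n) q x) (at x)"
    using smooth_q unfolding smooth_real_on_def I_def .
  have dp: "(p has_real_derivative p1 u) (at u)" if "u \<in> I" for u
    using bspec[OF spec[OF sp, of 0] that] by (simp add: p1_def)
  have dp1: "(p1 has_real_derivative p2 u) (at u)" if "u \<in> I" for u
    using bspec[OF spec[OF sp, of "Suc 0"] that] by (simp add: p1_def p2_def)
  have dp2: "(p2 has_real_derivative p3 u) (at u)" if "u \<in> I" for u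
    using bspec[OF spec[OF sp, of "Suc (Suc 0)"] that] by (simp add: p1_def p2_def p3_def)
  have dq: "(q has_real_derivative q1 u) (at u)" if "u \<in> I" for u
    using bspec[OF spec[OF sq, of 0] that] by (simp add: q1_def)
  have dq1: "(q1 has_real_derivative q2 u) (at u)" if "u \<in> I" for u
    using bspec[OF spec[OF sq, of "Suc 0"] that] by (simp add: q1_def q2_def)
  have dq2: "(q2 has_real_derivative q3 u) (at u)" if "u \<in> I" for u
    using bspec[OF spec[OF sq, of "Suc (Suc 0)"] that] by (simp add: q1_def q2_def q3_def)
  have arc: "(p1 u)^2 + (q1 u)^2 = 1" if "u \<in> I" for u
    using arclen that by (simp add: I_def p1_def q1_def)
  have ppos: "p u > 0" if "u \<in> I" for u using pos that by (simp add: I_def)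
  define X where "X = rev_surf p q"
  have g1: "pd 1 X u v = vector [p1 u * cos v, p1 u * sin v, q1 u]" if u: "u \<in> I" for u v
    by (rule pd1_eq[OF oI u, where g="\<lambda>s. vector [p s * cos v, p s * sin v, q s]"])
       (auto simp: X_def rev_surf_def intro!: vec3_deriv derivative_eq_intros dp[OF u] dq[OF u])
  have g2: "pd 2 X u v = vector [-(p u * sin v), p u * cos v, 0]" for u v
    unfolding X_def rev_surf_def
    by (rule pd2_eq) (auto intro!: vec3_deriv derivative_eq_intros)
  have g11: "pd 1 (pd 1 X) u v = vector [p2 u * cos v, p2 u * sin v, q2 u]" if u: "u \<in> I" for u v
    by (rule pd1_eq[OF oI u, where g="\<lambda>s. vector [p1 s * cos v, p1 s * sin v, q1 s]"])
       (erule g1, auto intro!: vec3_deriv derivative_eq_intros dp1[OF u] dq1[OF u])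
  have g12: "pd 2 (pd 1 X) u v = vector [-(p1 u * sin v), p1 u * cos v, 0]" if u: "u \<in> I" for u v
  proof -
    have e: "(\<lambda>t. pd 1 X u t) = (\<lambda>t. vector [p1 u * cos t, p1 u * sin t, q1 u])"
      using g1[OF u] by (intro ext) simp
    show ?thesis by (rule pd2_eq, subst e) (auto intro!: vec3_deriv derivative_eq_intros)
  qed
  have g21: "pd 1 (pd 2 X) u v = vector [-(p1 u * sin v), p1 u * cos v, 0]" if u: "u \<in> I" for u v
    by (rule pd1_eq[OF oI u, where g="\<lambda>s. vector [-(p s * sin v), p s * cos v, 0]"])
       (rule g2, auto intro!: vec3_deriv derivative_eq_intros dp[OF u])
  have g22: "pd 2 (pd 2 X) u v = vector [-(p u * cos v), -(p u * sin v), 0]" for u v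
    by (rule pd2_eq) (auto simp: g2 intro!: vec3_deriv derivative_eq_intros)
  have sc: "(sin v)^2 + (cos v)^2 = 1" for v :: real by (rule sin_cos_squared_add)
  have cr: "cross3 (pd 1 X u v) (pd 2 X u v) = vector [-(p u * q1 u * cos v), -(p u * q1 u * sin v), p u * p1 u]"
    if u: "u \<in> I" for u v
    unfolding g1[OF u] g2 cross3_vec
    by (rule vec3_cong) (use sc[of v] in algebra)+
  have nrm: "unit_normal X u v = vector [-(q1 u * cos v), -(q1 u * sin v), p1 u]" if u: "u \<in> I" for u v
  proof -
    have "norm (vector [-(p u * q1 u * cos v), -(p u * q1 u * sin v), p u * p1 u] :: real^3) = sqrt ((p u)^2)"
      unfolding norm_vec3
      by (rule arg_cong[where f=sqrt]) (use sc[of v] arc[OF u] in algebra)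
    also have "\<dots> = p u" using ppos[OF u] by simp
    finally have n: "norm (vector [-(p u * q1 u * cos v), -(p u * q1 u * sin v), p u * p1 u] :: real^3) = p u" .
    show ?thesis unfolding unit_normal_def Let_def cr[OF u] n scaleR_vec3
      using ppos[OF u] by (intro vec3_cong) (simp_all add: field_simps)
  qed
  define kap where "kap = (\<lambda>u. p1 u * q2 u - p2 u * q1 u)"
  have s11: "sff X 1 1 u v = kap u" if u: "u \<in> I" for u v
    unfolding sff_def g11[OF u] nrm[OF u] inner_vec3 kap_def by (use sc[of v] in algebra)
  have s12: "sff X 1 2 u v = 0" if u: "u \<in> I" for u v
    unfolding sff_def g12[OF u] nrm[OF u] inner_vec3 by algebra
  have s21: "sff X 2 1 u v = 0" if u: "u \<in> I" for u v
    unfolding sff_def g21[OF u] nrm[OF u] inner_vec3 by algebra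
  have s22: "sff X 2 2 u v = p u * q1 u" if u: "u \<in> I" for u v
    unfolding sff_def g22 nrm[OF u] inner_vec3 by (use sc[of v] in algebra)
  have f11: "fff X 1 1 u v = 1" if u: "u \<in> I" for u v
    unfolding fff_def g1[OF u] inner_vec3 by (use sc[of v] arc[OF u] in algebra)
  have f12: "fff X 1 2 u v = 0" if u: "u \<in> I" for u v
    unfolding fff_def g1[OF u] g2 inner_vec3 by algebra
  have f21: "fff X 2 1 u v = 0" if u: "u \<in> I" for u v
    unfolding fff_def g1[OF u] g2 inner_vec3 by algebra
  have f22: "fff X 2 2 u v = (p u)^2" if u: "u \<in> I" for u v
    unfolding fff_def g2 inner_vec3 by (use sc[of v] in algebra)
  have knz: "kap u \<noteq> 0" and snz: "q1 u \<noteq> 0" if u: "u \<in> I" for u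
  proof -
    have "gauss_curv X u 0 \<noteq> 0" using K_nz u by (simp add: I_def X_def)
    hence "kap u * (p u * q1 u) \<noteq> 0"
      unfolding gauss_curv_def det2_def using s11[OF u] s12[OF u] s21[OF u] s22[OF u]
        f11[OF u] f12[OF u] f21[OF u] f22[OF u] by auto
    thus "kap u \<noteq> 0" "q1 u \<noteq> 0" by auto
  qed
  define kapd where "kapd = (\<lambda>u. p1 u * q3 u - p3 u * q1 u)"
  define G where "G = (\<lambda>u. kap u * p u * q1 u)"
  define Gd where "Gd = (\<lambda>u. kapd u * p u * q1 u + kap u * p1 u * q1 u + kap u * p u * q2 u)"
  define W where "W = (\<lambda>u. sqrt \<bar>G u\<bar>)"
  define Wd where "Wd = (\<lambda>u. sgn (G u) * Gd u / (2 * W u))"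
  define E1d where "E1d = (\<lambda>u. (p2 u * kap u - p1 u * kapd u) / (kap u)^2)"
  define E3d where "E3d = (\<lambda>u. (q2 u * kap u - q1 u * kapd u) / (kap u)^2)"
  have Gnz: "G u \<noteq> 0" if u: "u \<in> I" for u
    using knz[OF u] snz[OF u] ppos[OF u] by (simp add: G_def)
  have dkap: "(kap has_real_derivative kapd u) (at u)" if u: "u \<in> I" for u
    unfolding kap_def kapd_def
    by (auto intro!: derivative_eq_intros dp1[OF u] dq1[OF u] dp2[OF u] dq2[OF u] simp: algebra_simps)
  have dG: "(G has_real_derivative Gd u) (at u)" if u: "u \<in> I" for u
    unfolding G_def Gd_def
    by (auto intro!: derivative_eq_intros dkap[OF u] dp[OF u] dq1[OF u] simp: algebra_simps)
  have dW: "(W has_real_derivative Wd u) (at u)" if u: "u \<in> I" for u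
    unfolding W_def Wd_def using sqrt_abs_deriv[OF dG[OF u] Gnz[OF u]] by simp
  have dE1: "((\<lambda>s. p1 s / kap s) has_real_derivative E1d u) (at u)" if u: "u \<in> I" for u
    unfolding E1d_def using knz[OF u]
    by (auto intro!: derivative_eq_intros dkap[OF u] dp1[OF u] simp: power2_eq_square)
  have dE3: "((\<lambda>s. q1 s / kap s) has_real_derivative E3d u) (at u)" if u: "u \<in> I" for u
    unfolding E3d_def using knz[OF u]
    by (auto intro!: derivative_eq_intros dkap[OF u] dq1[OF u] simp: power2_eq_square)
  define f1 where "f1 = (\<lambda>u' v'. X u' v' $ 1)"
  define f3 where "f3 = (\<lambda>u' v'. X u' v' $ 3)"
  have pf11: "pd 1 f1 u v = p1 u * cos v" if u: "u \<in> I" for u v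
    by (rule pd1_real[OF oI u, where g="\<lambda>s. p s * cos v"])
       (auto simp: f1_def X_def rev_surf_nth intro!: derivative_eq_intros dp[OF u])
  have pf12: "pd 2 f1 u v = -(p u * sin v)" for u v
    unfolding f1_def X_def rev_surf_nth
    by (rule pd2_real) (auto intro!: derivative_eq_intros)
  have pf31: "pd 1 f3 u v = q1 u" if u: "u \<in> I" for u v
    by (rule pd1_real[OF oI u, where g="\<lambda>s. q s"])
       (auto simp: f3_def X_def rev_surf_nth intro!: derivative_eq_intros dq[OF u])
  have pf32: "pd 2 f3 u v = 0" for u v
    unfolding f3_def X_def rev_surf_nth
    by (rule pd2_real) (auto intro!: derivative_eq_intros)
  define F where "F = (\<lambda>f i. (\<lambda>u' v'. sqrt \<bar>det2 (\<lambda>k l. sff X k l u' v')\<bar> *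
            (\<Sum>j\<in>{1,2}. inv2 (\<lambda>k l. sff X k l u' v') i j * pd j f u' v')))"
  have lapE: "laplace_II X f u v = - (1 / sqrt \<bar>det2 (\<lambda>k l. sff X k l u v)\<bar>) *
       (pd 1 (F f 1) u v + pd 2 (F f 2) u v)" for f u v
    unfolding laplace_II_def F_def by simp
  have det: "det2 (\<lambda>k l. sff X k l u v) = G u" if u: "u \<in> I" for u v
    unfolding det2_def s11[OF u] s12[OF u] s21[OF u] s22[OF u] G_def by simp
  have Fval: "F f i u v = W u * (inv2 (\<lambda>k l. sff X k l u v) i 1 * pd 1 f u v + inv2 (\<lambda>k l. sff X k l u v) i 2 * pd 2 f u v)"
    if u: "u \<in> I" for f i u v
    unfolding F_def W_def det[OF u] by simp
  have i11: "inv2 (\<lambda>k l. sff X k l u v) 1 1 = 1 / kap u" if u: "u \<in> I" for u v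
    unfolding inv2_def det[OF u] s22[OF u] G_def using snz[OF u] ppos[OF u] by simp
  have i12: "inv2 (\<lambda>k l. sff X k l u v) 1 2 = 0" if u: "u \<in> I" for u v
    unfolding inv2_def s12[OF u] by simp
  have i21: "inv2 (\<lambda>k l. sff X k l u v) 2 1 = 0" if u: "u \<in> I" for u v
    unfolding inv2_def s21[OF u] by simp
  have i22: "inv2 (\<lambda>k l. sff X k l u v) 2 2 = 1 / (p u * q1 u)" if u: "u \<in> I" for u v
    unfolding inv2_def det[OF u] s11[OF u] G_def using knz[OF u] by simp
  have lap1: "laplace_II X f1 u v = -(1 / W u) * ((Wd u * (p1 u / kap u) + E1d u * W u) * cos v
       + (-(W u / q1 u)) * cos v)" if u: "u \<in> I" for u v
  proof -
    have a: "pd 1 (F f1 1) u v = (Wd u * (p1 u / kap u) + E1d u * W u) * cos v"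
    proof (rule pd1_real[OF oI u, where g="\<lambda>s. W s * (p1 s / kap s) * cos v"])
      show "F f1 1 s v = W s * (p1 s / kap s) * cos v" if s: "s \<in> I" for s
        unfolding Fval[OF s] i11[OF s] i12[OF s] pf11[OF s] by simp
      show "((\<lambda>s. W s * (p1 s / kap s) * cos v) has_real_derivative
            (Wd u * (p1 u / kap u) + E1d u * W u) * cos v) (at u)"
        by (rule DERIV_cmult_right[OF DERIV_mult[OF dW[OF u] dE1[OF u]]])
    qed
    have e: "(\<lambda>t. F f1 2 u t) = (\<lambda>t. -(W u / q1 u) * sin t)"
    proof
      fix t show "F f1 2 u t = -(W u / q1 u) * sin t"
        unfolding Fval[OF u] i21[OF u] i22[OF u] pf12 using ppos[OF u] by simp
    qed
    have b: "pd 2 (F f1 2) u v = -(W u / q1 u) * cos v"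
      by (rule pd2_real, subst e) (use snz[OF u] in \<open>auto intro!: derivative_eq_intros\<close>)
    show ?thesis unfolding lapE a b det[OF u] W_def by simp
  qed
  have lap3: "laplace_II X f3 u v = -(1 / W u) * (Wd u * (q1 u / kap u) + E3d u * W u)"
    if u: "u \<in> I" for u v
  proof -
    have a: "pd 1 (F f3 1) u v = Wd u * (q1 u / kap u) + E3d u * W u"
    proof (rule pd1_real[OF oI u, where g="\<lambda>s. W s * (q1 s / kap s)"])
      show "F f3 1 s v = W s * (q1 s / kap s)" if s: "s \<in> I" for s
        unfolding Fval[OF s] i11[OF s] i12[OF s] pf31[OF s] by simp
      show "((\<lambda>s. W s * (q1 s / kap s)) has_real_derivative Wd u * (q1 u / kap u) + E3d u * W u) (at u)"
        by (rule DERIV_mult[OF dW[OF u] dE3[OF u]])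
    qed
    have e: "(\<lambda>t. F f3 2 u t) = (\<lambda>t. 0)"
    proof
      fix t show "F f3 2 u t = 0"
        unfolding Fval[OF u] i21[OF u] i22[OF u] pf32 by simp
    qed
    have b: "pd 2 (F f3 2) u v = 0"
      by (rule pd2_real, subst e) (auto intro!: derivative_eq_intros)
    show ?thesis unfolding lapE a b det[OF u] W_def by simp
  qed
  define la where "la = A $ 1 $ 1"
  define mu where "mu = A $ 3 $ 3"
  have eqc: "laplace_II X f1 u v = A$1$1 * (p u * cos v) + A$1$2 * (p u * sin v) + A$1$3 * q u
           \<and> laplace_II X f3 u v = A$3$1 * (p u * cos v) + A$3$2 * (p u * sin v) + A$3$3 * q u"
    if u: "u \<in> I" and v: "v \<in> {0..<2*pi}" for u v
  proof -
    have ve: "(\<chi> k. laplace_II X (\<lambda>u' v'. X u' v' $ k) u v) = A *v X u v"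
      using eq u v by (simp add: I_def X_def)
    have c1: "laplace_II X f1 u v = (A *v X u v) $ 1"
      using arg_cong[OF ve, of "\<lambda>z. z $ 1"] unfolding f1_def by simp
    have c3: "laplace_II X f3 u v = (A *v X u v) $ 3"
      using arg_cong[OF ve, of "\<lambda>z. z $ 3"] unfolding f3_def by simp
    show ?thesis unfolding c1 c3
      by (simp add: matrix_vector_mult_def sum_3 X_def rev_surf_nth)
  qed
  have v0: "(0::real) \<in> {0..<2*pi}" and vpi: "pi \<in> {0..<2*pi}" by auto
  have Eq1: "- (Gd u / (2 * G u)) * (p1 u / kap u) - E1d u + 1 / q1 u = la * p u" if u: "u \<in> I" for u
  proof -
    define L0 where "L0 = -(1 / W u) * ((Wd u * (p1 u / kap u) + E1d u * W u) + (-(W u / q1 u)))"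
    have a: "L0 = A$1$1 * p u + A$1$3 * q u" using eqc[OF u v0] lap1[OF u, of 0] by (simp add: L0_def)
    have Wp: "W u > 0" using Gnz[OF u] by (simp add: W_def)
    have lp: "laplace_II X f1 u pi = - L0" unfolding lap1[OF u, of pi] L0_def using Wp
      by (simp add: field_simps)
    have b: "- L0 = - (A$1$1 * p u) + A$1$3 * q u" using eqc[OF u vpi] unfolding lp by simp
    have L0v: "L0 = la * p u" using a b by (simp add: la_def)
    have "L0 = -(1 / sqrt \<bar>G u\<bar>) * ((sgn (G u) * Gd u / (2 * sqrt \<bar>G u\<bar>) * (p1 u / kap u)
        + sqrt \<bar>G u\<bar> * E1d u) - sqrt \<bar>G u\<bar> * (1 / q1 u))"
      unfolding L0_def Wd_def W_def by (simp add: algebra_simps)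
    also have "\<dots> = - (Gd u / (2 * G u)) * (p1 u / kap u) - E1d u + 1 / q1 u"
      by (rule lapform[OF Gnz[OF u]])
    finally show ?thesis using L0v by simp
  qed
  have Eq3: "- (Gd u / (2 * G u)) * (q1 u / kap u) - E3d u = mu * q u" if u: "u \<in> I" for u
  proof -
    define L0 where "L0 = -(1 / W u) * (Wd u * (q1 u / kap u) + E3d u * W u)"
    have a: "L0 = A$3$1 * p u + A$3$3 * q u" using eqc[OF u v0] lap3[OF u, of 0] by (simp add: L0_def)
    have b: "L0 = - (A$3$1 * p u) + A$3$3 * q u" using eqc[OF u vpi] lap3[OF u, of pi]
      by (simp add: L0_def)
    have L0v: "L0 = mu * q u" using a b by (simp add: mu_def)
    have "L0 = -(1 / sqrt \<bar>G u\<bar>) * ((sgn (G u) * Gd u / (2 * sqrt \<bar>G u\<bar>) * (q1 u / kap u)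
        + sqrt \<bar>G u\<bar> * E3d u) - sqrt \<bar>G u\<bar> * 0)"
      unfolding L0_def Wd_def W_def by (simp add: algebra_simps)
    also have "\<dots> = - (Gd u / (2 * G u)) * (q1 u / kap u) - E3d u + 0"
      by (rule lapform[OF Gnz[OF u]])
    finally show ?thesis using L0v by simp
  qed
  have main: "(\<exists>r>0. \<forall>u\<in>{a<..<b}. (p u)^2 + (q u)^2 = r^2) \<or>
         (\<exists>C>0. \<exists>d. \<forall>u\<in>{a<..<b}. p u = C * cosh ((q u - d) / C))"
  proof -
    have I': "\<And>u. u \<in> {a<..<b} \<Longrightarrow> u \<in> I" by (simp add: I_def)
    have E1A: "\<And>u. u \<in> {a<..<b} \<Longrightarrow> - (((p1 u * q3 u - p3 u * q1 u) * p u * q1 u + (p1 u * q2 u - p2 u * q1 u) * p1 u * q1 u +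
            (p1 u * q2 u - p2 u * q1 u) * p u * q2 u) / (2 * ((p1 u * q2 u - p2 u * q1 u) * p u * q1 u))) *
          (p1 u / (p1 u * q2 u - p2 u * q1 u)) -
          (p2 u * (p1 u * q2 u - p2 u * q1 u) - p1 u * (p1 u * q3 u - p3 u * q1 u)) /
          (p1 u * q2 u - p2 u * q1 u)^2 + 1 / q1 u = la * p u"
      using Eq1 I' by (simp add: G_def Gd_def kap_def kapd_def E1d_def)
    have E3A: "\<And>u. u \<in> {a<..<b} \<Longrightarrow> - (((p1 u * q3 u - p3 u * q1 u) * p u * q1 u + (p1 u * q2 u - p2 u * q1 u) * p1 u * q1 u +
            (p1 u * q2 u - p2 u * q1 u) * p u * q2 u) / (2 * ((p1 u * q2 u - p2 u * q1 u) * p u * q1 u))) *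
          (q1 u / (p1 u * q2 u - p2 u * q1 u)) -
          (q2 u * (p1 u * q2 u - p2 u * q1 u) - q1 u * (p1 u * q3 u - p3 u * q1 u)) /
          (p1 u * q2 u - p2 u * q1 u)^2 = mu * q u"
      using Eq3 I' by (simp add: G_def Gd_def kap_def kapd_def E3d_def)
    have knzA: "\<And>u. u \<in> {a<..<b} \<Longrightarrow> p1 u * q2 u - p2 u * q1 u \<noteq> 0"
      using knz I' by (simp add: kap_def)
    show ?thesis
      by (rule mid[OF ab dp[OF I'] dp1[OF I'] dp2[OF I'] dq[OF I'] dq1[OF I'] dq2[OF I'] arc[OF I']
           knzA snz[OF I'] ppos[OF I'] E1A E3A])
  qed
  have injq: "inj_on q I" unfolding I_def by (rule inj_deriv) (use dq snz in \<open>auto simp: I_def\<close>)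
  have contq: "continuous_on I q"
    using dq by (auto intro!: continuous_at_imp_continuous_on DERIV_isCont)
  have oq: "open (q ` I)" by (rule injective_into_1d_imp_open_map_UNIV[OF oI contq injq subset_refl])
  have sq2: "x^2 \<ge> 0" for x :: real by simp
  show ?thesis
    using main
  proof
    assume "\<exists>r>0. \<forall>u\<in>{a<..<b}. (p u)^2 + (q u)^2 = r^2"
    then obtain r where r: "r > 0" "\<And>u. u \<in> I \<Longrightarrow> (p u)^2 + (q u)^2 = r^2" by (auto simp: I_def)
    have res: "(\<lambda>(u, v). rev_surf p q u v) ` (I \<times> {0..<2*pi}) \<subseteq> sphere 0 r \<and>
         openin (top_of_set (sphere 0 r)) ((\<lambda>(u, v). rev_surf p q u v) ` (I \<times> {0..<2*pi}))"
    proof (rule surf_open[OF oq _ ppos])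
      fix u and x :: "real^3" assume u: "u \<in> I" and x3: "x$3 = q u"
      have "x \<in> sphere 0 r \<longleftrightarrow> sqrt ((x$1)^2 + (x$2)^2 + (x$3)^2) = r" by (simp add: norm3)
      also have "\<dots> \<longleftrightarrow> (x$1)^2 + (x$2)^2 + (q u)^2 = r^2"
        using r(1) unfolding x3 by (intro sqrt_eq_iff') (auto intro: add_nonneg_nonneg)
      also have "\<dots> \<longleftrightarrow> (x$1)^2 + (x$2)^2 = (p u)^2" using r(2)[OF u] by auto
      also have "\<dots> \<longleftrightarrow> sqrt ((x$1)^2 + (x$2)^2) = p u"
        using ppos[OF u] by (intro sqrt_eq_iff'[symmetric]) auto
      finally show "x \<in> sphere 0 r \<longleftrightarrow> sqrt ((x$1)^2 + (x$2)^2) = p u" .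
    qed
    have "is_sphere (sphere (0::real^3) r)" unfolding is_sphere_def using r(1) by blast
    thus ?thesis using res unfolding I_def by blast
  next
    assume "\<exists>C>0. \<exists>d. \<forall>u\<in>{a<..<b}. p u = C * cosh ((q u - d) / C)"
    then obtain C0 d where C0: "C0 > 0" "\<And>u. u \<in> I \<Longrightarrow> p u = C0 * cosh ((q u - d) / C0)"
      by (auto simp: I_def)
    define t where "t = (vector [0, 0, d] :: real^3)"
    define Cs where "Cs = (\<lambda>y. y + t) ` std_catenoid C0"
    have res: "(\<lambda>(u, v). rev_surf p q u v) ` (I \<times> {0..<2*pi}) \<subseteq> Cs \<and>
         openin (top_of_set Cs) ((\<lambda>(u, v). rev_surf p q u v) ` (I \<times> {0..<2*pi}))"
    proof (rule surf_open[OF oq _ ppos])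
      fix u and x :: "real^3" assume u: "u \<in> I" and x3: "x$3 = q u"
      have "x \<in> Cs \<longleftrightarrow> sqrt ((x$1)^2 + (x$2)^2) = C0 * cosh ((x$3 - d) / C0)"
        unfolding Cs_def image_translate_iff std_catenoid_def t_def by simp
      also have "\<dots> \<longleftrightarrow> sqrt ((x$1)^2 + (x$2)^2) = p u" using C0(2)[OF u] x3 by simp
      finally show "x \<in> Cs \<longleftrightarrow> sqrt ((x$1)^2 + (x$2)^2) = p u" .
    qed
    have "is_catenoid Cs" unfolding is_catenoid_def Cs_def
      by (rule exI[of _ C0], use C0(1) in simp, rule exI[of _ "\<lambda>y. y + t"]) (simp add: dist_norm)
    thus ?thesis using res unfolding I_def by blast
  qed
qed


end
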